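(* For every integers $d \geq 2$ and $s \geq 1$, $\mathsf U_{d,s}\subseteq\mathsf O_{d,2s}$.
   Context: For integers $d\ge2$, $s\ge1$ and $U\in M_{ds}(\mathbb C)$ viewed as a $d\times d$ block matrix with blocks $U_{ij}\in M_s(\mathbb C)$, set $\phi_{d,s}(U)=\big(\tfrac1s\|U_{ij}\|_F^2\big)_{i,j=1}^d$ with $\|X\|_F=\operatorname{Tr}(XX^* )^{1/2}$. Define $\mathsf U_{d,s}:=\phi_{d,s}(\mathcal U(ds))$, where $\mathcal U(n)$ is the unitary group, and $\mathsf O_{d,s}:=\phi_{d,s}(\mathcal O(ds))$, where $\mathcal O(n)$ is the group of $n\times n$ real orthogonal matrices. *)

theory Defs
  imports Complex_Main
begin

text \<open>Square n x n matrices are represented as functions nat => nat => 'a,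
  only the entries with indices < n being relevant (indices are 0-based).\<close>

definition unitary_mat :: "nat \<Rightarrow> (nat \<Rightarrow> nat \<Rightarrow> complex) \<Rightarrow> bool" where
  "unitary_mat n U \<longleftrightarrow>
     (\<forall>i<n. \<forall>j<n. (\<Sum>k<n. U i k * cnj (U j k)) = (if i = j then 1 else 0))"

definition real_orthogonal_mat :: "nat \<Rightarrow> (nat \<Rightarrow> nat \<Rightarrow> real) \<Rightarrow> bool" where
  "real_orthogonal_mat n Q \<longleftrightarrow>
     (\<forall>i<n. \<forall>j<n. (\<Sum>k<n. Q i k * Q j k) = (if i = j then 1 else 0))"

text \<open>phi_{d,s}: the d x d matrix of normalised squared Frobenius norms of the
  s x s blocks; block (i,j) consists of the entries (i*s+a, j*s+b), a,b<s.\<close>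

definition phi :: "nat \<Rightarrow> nat \<Rightarrow> (nat \<Rightarrow> nat \<Rightarrow> complex) \<Rightarrow> (nat \<Rightarrow> nat \<Rightarrow> real)" where
  "phi d s U = (\<lambda>i j. if i < d \<and> j < d
      then (1 / real s) * (\<Sum>a<s. \<Sum>b<s. (cmod (U (i * s + a) (j * s + b)))\<^sup>2)
      else 0)"

definition U_set :: "nat \<Rightarrow> nat \<Rightarrow> (nat \<Rightarrow> nat \<Rightarrow> real) set" where
  "U_set d s = phi d s ` {U. unitary_mat (d * s) U}"

definition O_set :: "nat \<Rightarrow> nat \<Rightarrow> (nat \<Rightarrow> nat \<Rightarrow> real) set" where
  "O_set d s = phi d s ` {(\<lambda>i j. complex_of_real (Q i j)) | Q. real_orthogonal_mat (d * s) Q}"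

end

theory Submission
  imports Defs
begin

definition up :: "nat \<Rightarrow> nat \<Rightarrow> nat" where "up s p = (p div (2*s))*s + p mod s"
definition tp :: "nat \<Rightarrow> nat \<Rightarrow> bool" where "tp s p = (s \<le> p mod (2*s))"
definition enc :: "nat \<Rightarrow> nat \<Rightarrow> bool \<Rightarrow> nat" where
  "enc s v t = (v div s)*(2*s) + (if t then s else 0) + v mod s"

lemma mod2s: assumes "0 < (s::nat)" shows "p mod (2*s) = (if tp s p then s else 0) + p mod s"
proof -
  have "p mod s = p mod (2*s) mod s" by (simp add: mod_mod_cancel)
  moreover have "p mod (2*s) < 2*s" using assms by simp
  ultimately show ?thesis unfolding tp_def
    by (auto simp: le_mod_geq)
qed

lemma up_div: assumes "0 < (s::nat)" shows "up s p div s = p div (2*s)" "up s p mod s = p mod s"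
  using assms unfolding up_def by auto

lemma enc_up: assumes "0 < (s::nat)" shows "enc s (up s q) (tp s q) = q"
proof -
  have "q = (q div (2*s))*(2*s) + q mod (2*s)" by (metis div_mult_mod_eq)
  then show ?thesis unfolding enc_def using up_div[OF assms] mod2s[OF assms, of q] by simp
qed

lemma enc_parts: assumes "0 < (s::nat)"
  shows "enc s v t div (2*s) = v div s" "enc s v t mod (2*s) = (if t then s else 0) + v mod s"
proof -
  have "v mod s < s" using assms by simp
  then have lt: "(if t then s else 0) + v mod s < 2*s" by auto
  have e: "enc s v t = (v div s)*(2*s) + ((if t then s else 0) + v mod s)" unfolding enc_def by simp
  show "enc s v t div (2*s) = v div s" unfolding e using lt by simp
  show "enc s v t mod (2*s) = (if t then s else 0) + v mod s" unfolding e using lt by simp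
qed

lemma up_enc: assumes "0 < (s::nat)" shows "up s (enc s v t) = v" "tp s (enc s v t) = t"
proof -
  have "enc s v t = s*(2*(v div s) + (if t then 1 else 0)) + v mod s" unfolding enc_def by (simp add: algebra_simps)
  then have m: "enc s v t mod s = v mod s" by simp
  show "up s (enc s v t) = v" unfolding up_def enc_parts(1)[OF assms] m by simp
  show "tp s (enc s v t) = t" unfolding tp_def enc_parts(2)[OF assms] using assms mod_less_divisor[OF assms, of v] by auto
qed

lemma up_lt: assumes "0 < (s::nat)" "p < 2*d*s" shows "up s p < d*s"
proof -
  have "p div (2*s) < d" using assms by (simp add: div_less_iff_less_mult mult.commute mult.left_commute)
  then have "p div (2*s) + 1 \<le> d" by simp
  then have "(p div (2*s) + 1) * s \<le> d * s" by (rule mult_right_mono) simp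
  moreover have "p mod s < s" using assms by simp
  ultimately show ?thesis unfolding up_def by (simp add: algebra_simps)
qed

lemma enc_lt: assumes "0 < (s::nat)" "v < d*s" shows "enc s v t < 2*d*s"
proof -
  have "v div s < d" using assms by (simp add: div_less_iff_less_mult)
  then have "v div s + 1 \<le> d" by simp
  then have "(v div s + 1) * (2*s) \<le> d * (2*s)" by (rule mult_right_mono) simp
  moreover have "v mod s < s" using assms by simp
  ultimately show ?thesis unfolding enc_def by (auto simp: algebra_simps)
qed

lemma sum_reidx: assumes "0 < (s::nat)"
  shows "(\<Sum>q<2*d*s. F (up s q) (tp s q)) = (\<Sum>v<d*s. F v False + F v True)"
proof -
  have "(\<Sum>q<2*d*s. F (up s q) (tp s q)) = (\<Sum>x\<in>{..<d*s} \<times> UNIV. F (fst x) (snd x))"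
    apply (rule sum.reindex_bij_witness[where j = "\<lambda>q. (up s q, tp s q)" and i = "\<lambda>x. enc s (fst x) (snd x)"])
    using assms by (auto simp: enc_up up_enc up_lt enc_lt)
  also have "\<dots> = (\<Sum>v<d*s. \<Sum>t\<in>UNIV. F v t)" by (simp add: sum.cartesian_product case_prod_beta')
  also have "\<dots> = (\<Sum>v<d*s. F v False + F v True)" by (simp add: UNIV_bool add.commute)
  finally show ?thesis .
qed

lemma up_tp_eq: assumes "0 < (s::nat)" shows "(p = p') \<longleftrightarrow> (up s p = up s p' \<and> tp s p = tp s p')"
proof
  assume "up s p = up s p' \<and> tp s p = tp s p'"
  then have "enc s (up s p) (tp s p) = enc s (up s p') (tp s p')" by simp
  then show "p = p'" unfolding enc_up[OF assms] .
qed simp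

lemma sum_2s: "(\<Sum>a<2*(s::nat). f a) = (\<Sum>a<s. f a) + (\<Sum>a<s. f (a + s))"
proof -
  have "(\<Sum>a<2*s. f a) = (\<Sum>a\<in>{0..<s}. f a) + (\<Sum>a\<in>{s..<2*s}. f a)"
    using sum.atLeastLessThan_concat[of 0 s "2*s" f] by (simp add: atLeast0LessThan)
  also have "(\<Sum>a\<in>{s..<2*s}. f a) = (\<Sum>a\<in>{0..<s}. f (a + s))"
    using sum.shift_bounds_nat_ivl[of f 0 s s] by (simp add: mult_2)
  finally show ?thesis by (simp add: atLeast0LessThan)
qed

lemma enc_blk: assumes "0 < (s::nat)" "a < s"
  shows "enc s (i*s+a) t = i*(2*s) + (if t then s else 0) + a"
  unfolding enc_def using assms by simp

definition G :: "(nat \<Rightarrow> nat \<Rightarrow> complex) \<Rightarrow> nat \<Rightarrow> bool \<Rightarrow> nat \<Rightarrow> bool \<Rightarrow> real" where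
  "G U u t v t' = (if t = t' then Re (U u v) else if t then Im (U u v) else - Im (U u v))"

definition QQ :: "nat \<Rightarrow> (nat \<Rightarrow> nat \<Rightarrow> complex) \<Rightarrow> nat \<Rightarrow> nat \<Rightarrow> real" where
  "QQ s U p q = G U (up s p) (tp s p) (up s q) (tp s q)"

lemma G_orth:
  assumes "unitary_mat n U" "u < n" "u' < n"
  shows "(\<Sum>v<n. G U u t v False * G U u' t' v False + G U u t v True * G U u' t' v True)
     = (if u = u' \<and> t = t' then 1 else 0)"
proof -
  have S: "(\<Sum>v<n. U u v * cnj (U u' v)) = (if u = u' then 1 else 0)"
    using assms unfolding unitary_mat_def by blast
  have R: "(\<Sum>v<n. Re (U u v) * Re (U u' v) + Im (U u v) * Im (U u' v)) = (if u = u' then 1 else 0)"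
  proof -
    have "(\<Sum>v<n. Re (U u v) * Re (U u' v) + Im (U u v) * Im (U u' v)) = Re (\<Sum>v<n. U u v * cnj (U u' v))"
      by (simp add: Re_sum)
    then show ?thesis using S by simp
  qed
  have I: "(\<Sum>v<n. Im (U u v) * Re (U u' v) - Re (U u v) * Im (U u' v)) = 0"
  proof -
    have "(\<Sum>v<n. Im (U u v) * Re (U u' v) - Re (U u v) * Im (U u' v)) = Im (\<Sum>v<n. U u v * cnj (U u' v))"
      by (simp add: Im_sum)
    then show ?thesis using S by simp
  qed
  show ?thesis
  proof (cases t; cases t')
    assume "t" "t'" then show ?thesis using R by (simp add: G_def add.commute)
  next
    assume "\<not> t" "\<not> t'" then show ?thesis using R by (simp add: G_def)
  next
    assume "t" "\<not> t'" then show ?thesis using I by (simp add: G_def algebra_simps)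
  next
    assume "\<not> t" "t'"
    have "(\<Sum>v<n. G U u t v False * G U u' t' v False + G U u t v True * G U u' t' v True)
       = - (\<Sum>v<n. Im (U u v) * Re (U u' v) - Re (U u v) * Im (U u' v))"
      using \<open>\<not> t\<close> \<open>t'\<close> by (simp add: G_def sum_negf[symmetric] algebra_simps)
    then show ?thesis using I \<open>\<not> t\<close> \<open>t'\<close> by simp
  qed
qed

lemma QQ_orth:
  assumes "0 < s" "unitary_mat (d*s) U"
  shows "real_orthogonal_mat (d*(2*s)) (QQ s U)"
  unfolding real_orthogonal_mat_def
proof (intro allI impI)
  fix p p' assume p: "p < d*(2*s)" and p': "p' < d*(2*s)"
  have e: "d*(2*s) = 2*d*s" by simp
  have "(\<Sum>k<d*(2*s). QQ s U p k * QQ s U p' k)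
     = (\<Sum>v<d*s. G U (up s p) (tp s p) v False * G U (up s p') (tp s p') v False
                 + G U (up s p) (tp s p) v True * G U (up s p') (tp s p') v True)"
    unfolding e QQ_def using sum_reidx[OF assms(1), of "\<lambda>v t'. G U (up s p) (tp s p) v t' * G U (up s p') (tp s p') v t'" d]
    by simp
  also have "\<dots> = (if up s p = up s p' \<and> tp s p = tp s p' then 1 else 0)"
    using G_orth[OF assms(2)] up_lt[OF assms(1)] p p' e by simp
  also have "\<dots> = (if p = p' then 1 else 0)" by (simp only: up_tp_eq[OF assms(1), of p p'])
  finally show "(\<Sum>k<d*(2*s). QQ s U p k * QQ s U p' k) = (if p = p' then 1 else 0)" .
qed

lemma QQ_blk: assumes "0 < s" "a < s" "b < s"
  shows "QQ s U (i*(2*s) + a) (j*(2*s) + b) = Re (U (i*s+a) (j*s+b))"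
    "QQ s U (i*(2*s) + (a+s)) (j*(2*s) + b) = Im (U (i*s+a) (j*s+b))"
    "QQ s U (i*(2*s) + a) (j*(2*s) + (b+s)) = - Im (U (i*s+a) (j*s+b))"
    "QQ s U (i*(2*s) + (a+s)) (j*(2*s) + (b+s)) = Re (U (i*s+a) (j*s+b))"
proof -
  have E: "i*(2*s) + a = enc s (i*s+a) False" "i*(2*s) + (a+s) = enc s (i*s+a) True"
          "j*(2*s) + b = enc s (j*s+b) False" "j*(2*s) + (b+s) = enc s (j*s+b) True"
    using enc_blk[OF assms(1)] assms by auto
  show "QQ s U (i*(2*s) + a) (j*(2*s) + b) = Re (U (i*s+a) (j*s+b))"
    "QQ s U (i*(2*s) + (a+s)) (j*(2*s) + b) = Im (U (i*s+a) (j*s+b))"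
    "QQ s U (i*(2*s) + a) (j*(2*s) + (b+s)) = - Im (U (i*s+a) (j*s+b))"
    "QQ s U (i*(2*s) + (a+s)) (j*(2*s) + (b+s)) = Re (U (i*s+a) (j*s+b))"
    unfolding E QQ_def up_enc[OF assms(1)] G_def by simp_all
qed

lemma phi_QQ: assumes "0 < s"
  shows "phi d (2*s) (\<lambda>i j. complex_of_real (QQ s U i j)) = phi d s U"
proof (intro ext)
  fix i j
  show "phi d (2*s) (\<lambda>i j. complex_of_real (QQ s U i j)) i j = phi d s U i j"
  proof (cases "i < d \<and> j < d")
    case False then show ?thesis unfolding phi_def by auto
  next
    case True
    have H: "(\<Sum>a<2*s. \<Sum>b<2*s. (QQ s U (i*(2*s)+a) (j*(2*s)+b))\<^sup>2)
       = 2 * (\<Sum>a<s. \<Sum>b<s. (cmod (U (i*s+a) (j*s+b)))\<^sup>2)"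
    proof -
      have "(\<Sum>a<2*s. \<Sum>b<2*s. (QQ s U (i*(2*s)+a) (j*(2*s)+b))\<^sup>2)
        = (\<Sum>a<s. \<Sum>b<s. (QQ s U (i*(2*s)+a) (j*(2*s)+b))\<^sup>2 + (QQ s U (i*(2*s)+a) (j*(2*s)+(b+s)))\<^sup>2
             + (QQ s U (i*(2*s)+(a+s)) (j*(2*s)+b))\<^sup>2 + (QQ s U (i*(2*s)+(a+s)) (j*(2*s)+(b+s)))\<^sup>2)"
        unfolding sum_2s by (simp add: sum.distrib algebra_simps)
      also have "\<dots> = (\<Sum>a<s. \<Sum>b<s. 2 * (cmod (U (i*s+a) (j*s+b)))\<^sup>2)"
        by (intro sum.cong refl) (simp add: QQ_blk[OF assms] cmod_power2)
      also have "\<dots> = 2 * (\<Sum>a<s. \<Sum>b<s. (cmod (U (i*s+a) (j*s+b)))\<^sup>2)"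
        by (simp add: sum_distrib_left)
      finally show ?thesis .
    qed
    have "phi d (2*s) (\<lambda>i j. complex_of_real (QQ s U i j)) i j
       = (1 / real (2*s)) * (\<Sum>a<2*s. \<Sum>b<2*s. (QQ s U (i*(2*s)+a) (j*(2*s)+b))\<^sup>2)"
      using True by (simp add: phi_def)
    also have "\<dots> = phi d s U i j" unfolding H using True assms by (simp add: phi_def)
    finally show ?thesis .
  qed
qed

theorem proposition4p2:
  fixes d s :: nat
  assumes "d \<ge> 2" and "s \<ge> 1"
  shows "U_set d s \<subseteq> O_set d (2 * s)"
proof
  fix x assume "x \<in> U_set d s"
  then obtain U where U: "unitary_mat (d*s) U" and x: "x = phi d s U" unfolding U_set_def by blast
  have s0: "0 < s" using assms by simp
  have "(\<lambda>i j. complex_of_real (QQ s U i j)) \<in> {(\<lambda>i j. complex_of_real (Q i j)) | Q. real_orthogonal_mat (d * (2*s)) Q}"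
    using QQ_orth[OF s0 U] by blast
  then show "x \<in> O_set d (2 * s)" unfolding O_set_def x phi_QQ[OF s0, of d U, symmetric]
    by (rule imageI)
qed

end
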